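(* Let $\mathcal C\subseteq\{0,1\}^n$ and $\mathcal D\subseteq\{0,1\}^m$ be neural codes and let $\phi:R_\mathcal D\to R_\mathcal C$ be a ring homomorphism. Then $\phi$ is a neural ring homomorphism if and only if the associated code map $q_\phi:\mathcal C\to\mathcal D$ is a composition of code maps of the following types (each between neural codes): 1. Permutation of labels: for a code $\mathcal A\subseteq\{0,1\}^k$ and a permutation $\sigma$ of $[k]$, the map $\mathcal A\to\mathcal A'$, $(a_1,\dots,a_k)\mapsto(a_{\sigma(1)},\dots,a_{\sigma(k)})$, where $\mathcal A'$ is the image of $\mathcal A$; 2. Adding codewords (inclusion): for codes $\mathcal A\subseteq\mathcal A'\subseteq\{0,1\}^k$, the map $\mathcal A\to\mathcal A'$, $a\mapsto a$; 3. Deleting the last neuron: $\mathcal A\to\mathcal A'$, $(a_1,\dots,a_k)\mapsto(a_1,\dots,a_{k-1})$, where $\mathcal A'$ is the image; 4. Repeating a neuron: for some $i\in[k]$, $\mathcal A\to\mathcal A'$, $(a_1,\dots,a_k)\mapsto(a_1,\dots,a_k,a_i)$, where $\mathcal A'$ is the image; 5. Adding a trivial neuron: $\mathcal A\to\mathcal A'$, $(a_1,\dots,a_k)\mapsto(a_1,\dots,a_k,0)$ for all $a$, or $(a_1,\dots,a_k)\mapsto(a_1,\dots,a_k,1)$ for all $a$, where $\mathcal A'$ is the image.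
   Context: For a code $\mathcal C\subseteq\{0,1\}^n$, $R_\mathcal C$ is the ring of all functions $\mathcal C\to\mathbb F_2$ (equivalently $\mathbb F_2[x_1,\dots,x_n]$ modulo the ideal of polynomials vanishing on $\mathcal C$), and $R[n]=R_{\{0,1\}^n}=\mathbb F_2[x_1,\dots,x_n]/\langle x_i^2-x_i\rangle$. $R_\mathcal C$ is an $R[n]$-module via $(r\cdot f)(c)=r(c)f(c)$. For $c\in\mathcal C$, $\rho_c\in R_\mathcal C$ is the indicator function of $\{c\}$. For a ring homomorphism $\phi:R_\mathcal D\to R_\mathcal C$ and $c\in\mathcal C$ there is a unique $d\in\mathcal D$ with $\phi(\rho_d)(c)=1$; the associated code map is $q_\phi(c)=$ this $d$. A ring homomorphism $\tau:R[m]\to R[n]$ is compatible with $\phi$ if $\phi(r\cdot f)=\tau(r)\cdot\phi(f)$ for all $r\in R[m]$, $f\in R_\mathcal D$. A ring homomorphism $\tau:R[m]\to R[n]$ is linear-monomial if $\tau(x_i)\in\{x_1,\dots,x_n,0,1\}$ for every $i\in[m]$. A ring homomorphism $\phi:R_\mathcal D\to R_\mathcal C$ is a neural ring homomorphism if there exists a linear-monomial ring homomorphism $\tau:R[m]\to R[n]$ compatible with $\phi$. *)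

theory Defs
  imports "HOL-Algebra.Ring" "HOL-Combinatorics.Permutations"
begin

text \<open>Codewords in {0,1}^n are boolean lists of length n; F_2 is rendered as bool
  (addition = exclusive or, multiplication = conjunction). Neurons are indexed 0..n-1.\<close>

definition cube :: "nat \<Rightarrow> bool list set" where
  "cube n = {xs. length xs = n}"

text \<open>R_C: the ring of all functions C \<rightarrow> F_2, represented as functions on all lists
  that vanish outside C.\<close>
definition code_ring :: "bool list set \<Rightarrow> (bool list \<Rightarrow> bool) ring" where
  "code_ring C = \<lparr> carrier = {f. \<forall>x. x \<notin> C \<longrightarrow> f x = False},
                   monoid.mult = (\<lambda>f g x. f x \<and> g x),
                   one = (\<lambda>x. x \<in> C),
                   zero = (\<lambda>x. False),
                   add = (\<lambda>f g x. f x \<noteq> g x) \<rparr>"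

abbreviation poly_ring :: "nat \<Rightarrow> (bool list \<Rightarrow> bool) ring" where
  "poly_ring n \<equiv> code_ring (cube n)"

text \<open>The variable x_(i+1) of R[n] (0-based index i).\<close>
definition var :: "nat \<Rightarrow> nat \<Rightarrow> bool list \<Rightarrow> bool" where
  "var n i = (\<lambda>c. c \<in> cube n \<and> c ! i)"

definition act :: "(bool list \<Rightarrow> bool) \<Rightarrow> (bool list \<Rightarrow> bool) \<Rightarrow> bool list \<Rightarrow> bool" where
  "act r f = (\<lambda>c. r c \<and> f c)"

definition rho :: "bool list \<Rightarrow> bool list \<Rightarrow> bool" where
  "rho c = (\<lambda>x. x = c)"

definition code_map :: "bool list set \<Rightarrow> ((bool list \<Rightarrow> bool) \<Rightarrow> (bool list \<Rightarrow> bool))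
    \<Rightarrow> bool list \<Rightarrow> bool list" where
  "code_map D \<phi> c = (THE d. d \<in> D \<and> \<phi> (rho d) c)"

definition compatible :: "nat \<Rightarrow> bool list set \<Rightarrow> bool list set
    \<Rightarrow> ((bool list \<Rightarrow> bool) \<Rightarrow> (bool list \<Rightarrow> bool))
    \<Rightarrow> ((bool list \<Rightarrow> bool) \<Rightarrow> (bool list \<Rightarrow> bool)) \<Rightarrow> bool" where
  "compatible m D C \<tau> \<phi> \<longleftrightarrow>
     (\<forall>r \<in> carrier (poly_ring m). \<forall>f \<in> carrier (code_ring D).
        \<phi> (act r f) = act (\<tau> r) (\<phi> f))"

definition linear_monomial :: "nat \<Rightarrow> nat \<Rightarrow> ((bool list \<Rightarrow> bool) \<Rightarrow> (bool list \<Rightarrow> bool)) \<Rightarrow> bool" where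
  "linear_monomial m n \<tau> \<longleftrightarrow>
     \<tau> \<in> ring_hom (poly_ring m) (poly_ring n) \<and>
     (\<forall>i < m. \<tau> (var m i) \<in> {var n j | j. j < n} \<union>
                 {\<zero>\<^bsub>poly_ring n\<^esub>, \<one>\<^bsub>poly_ring n\<^esub>})"

definition neural_ring_hom :: "nat \<Rightarrow> bool list set \<Rightarrow> nat \<Rightarrow> bool list set
    \<Rightarrow> ((bool list \<Rightarrow> bool) \<Rightarrow> (bool list \<Rightarrow> bool)) \<Rightarrow> bool" where
  "neural_ring_hom n C m D \<phi> \<longleftrightarrow>
     \<phi> \<in> ring_hom (code_ring D) (code_ring C) \<and>
     (\<exists>\<tau>. linear_monomial m n \<tau> \<and> compatible m D C \<tau> \<phi>)"

inductive elementary :: "nat \<Rightarrow> bool list set \<Rightarrow> nat \<Rightarrow> bool list set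
    \<Rightarrow> (bool list \<Rightarrow> bool list) \<Rightarrow> bool" where
  permute: "A \<subseteq> cube k \<Longrightarrow> \<sigma> permutes {..<k} \<Longrightarrow>
     elementary k A k ((\<lambda>a. map (\<lambda>i. a ! \<sigma> i) [0..<k]) ` A) (\<lambda>a. map (\<lambda>i. a ! \<sigma> i) [0..<k])"
| inclusion: "A \<subseteq> B \<Longrightarrow> B \<subseteq> cube k \<Longrightarrow> elementary k A k B id"
| delete_last: "A \<subseteq> cube k \<Longrightarrow> k \<ge> 1 \<Longrightarrow> elementary k A (k - 1) (butlast ` A) butlast"
| repeat: "A \<subseteq> cube k \<Longrightarrow> i < k \<Longrightarrow>
     elementary k A (k + 1) ((\<lambda>a. a @ [a ! i]) ` A) (\<lambda>a. a @ [a ! i])"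
| add_trivial: "A \<subseteq> cube k \<Longrightarrow>
     elementary k A (k + 1) ((\<lambda>a. a @ [b]) ` A) (\<lambda>a. a @ [b])"

inductive composite :: "nat \<Rightarrow> bool list set \<Rightarrow> nat \<Rightarrow> bool list set
    \<Rightarrow> (bool list \<Rightarrow> bool list) \<Rightarrow> bool" where
  single: "elementary k A l B f \<Longrightarrow> composite k A l B f"
| step: "composite k A l B f \<Longrightarrow> elementary l B p E g \<Longrightarrow> composite k A p E (g \<circ> f)"

end

theory Submission
  imports Defs
begin

definition ev :: "nat + bool \<Rightarrow> bool list \<Rightarrow> bool" where
  "ev s a = (case s of Inl j \<Rightarrow> a ! j | Inr b \<Rightarrow> b)"

definition good :: "nat \<Rightarrow> nat \<Rightarrow> (nat \<Rightarrow> nat + bool) \<Rightarrow> bool" where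
  "good k l s \<longleftrightarrow> (\<forall>i<l. \<forall>j. s i = Inl j \<longrightarrow> j < k)"

lemma elementary_form:
  assumes "elementary k A l B f"
  shows "A \<subseteq> cube k \<and> B \<subseteq> cube l \<and> f ` A \<subseteq> B \<and>
    (\<exists>s. good k l s \<and> (\<forall>a\<in>A. f a = map (\<lambda>i. ev (s i) a) [0..<l]))"
  using assms
proof cases
  case (permute \<sigma>)
  have "\<forall>i<k. \<sigma> i < k" using permute(5) permutes_in_image by fastforce
  then show ?thesis using permute
    by (auto simp: cube_def good_def ev_def intro!: exI[of _ "\<lambda>i. Inl (\<sigma> i)"])
next
  case inclusion
  then show ?thesis
    by (auto simp: cube_def good_def ev_def intro!: exI[of _ "\<lambda>i. Inl i"] nth_equalityI)
next
  case delete_last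
  then show ?thesis
    by (auto simp: cube_def good_def ev_def nth_butlast intro!: exI[of _ "\<lambda>i. Inl i"] nth_equalityI)
next
  case (repeat i)
  then show ?thesis
    by (auto simp: cube_def good_def ev_def nth_append split: if_splits
        intro!: exI[of _ "\<lambda>t. if t < k then Inl t else Inl i"] nth_equalityI)
next
  case (add_trivial b)
  then show ?thesis
    by (auto simp: cube_def good_def ev_def nth_append split: if_splits
        intro!: exI[of _ "\<lambda>t. if t < k then Inl t else Inr b"] nth_equalityI)
qed

lemma composite_form:
  assumes "composite k A l B f"
  shows "A \<subseteq> cube k \<and> B \<subseteq> cube l \<and> f ` A \<subseteq> B \<and>
    (\<exists>s. good k l s \<and> (\<forall>a\<in>A. f a = map (\<lambda>i. ev (s i) a) [0..<l]))"
  using assms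
proof induction
  case (single k A l B f)
  then show ?case by (rule elementary_form)
next
  case (step k A l B f p E g)
  from step(3) obtain s1 where s1: "good k l s1" "\<forall>a\<in>A. f a = map (\<lambda>i. ev (s1 i) a) [0..<l]"
    by blast
  from elementary_form[OF step(2)] obtain s2 where s2: "good l p s2"
    "\<forall>b\<in>B. g b = map (\<lambda>i. ev (s2 i) b) [0..<p]" "B \<subseteq> cube l" "E \<subseteq> cube p" "g ` B \<subseteq> E"
    by blast
  define s where "s = (\<lambda>i. case s2 i of Inl j \<Rightarrow> s1 j | Inr b \<Rightarrow> Inr b)"
  have "good k p s" using s1(1) s2(1) unfolding good_def s_def
    by (auto split: sum.splits)
  moreover have "\<forall>a\<in>A. (g \<circ> f) a = map (\<lambda>i. ev (s i) a) [0..<p]"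
  proof
    fix a assume a: "a \<in> A"
    then have fa: "f a \<in> B" using step(3) by blast
    show "(g \<circ> f) a = map (\<lambda>i. ev (s i) a) [0..<p]"
    proof (rule nth_equalityI)
      show "length ((g \<circ> f) a) = length (map (\<lambda>i. ev (s i) a) [0..<p])"
        using s2(2) fa by simp
      fix i assume "i < length ((g \<circ> f) a)"
      then have ip: "i < p" using s2(2) fa by simp
      show "(g \<circ> f) a ! i = map (\<lambda>i. ev (s i) a) [0..<p] ! i"
      proof (cases "s2 i")
        case (Inl j)
        then have "j < l" using s2(1) ip good_def by blast
        then show ?thesis using Inl ip s2(2) fa s1(2) a by (simp add: s_def ev_def)
      next
        case (Inr b)
        then show ?thesis using ip s2(2) fa by (simp add: s_def ev_def)
      qed
    qed
  qed
  moreover have "(g \<circ> f) ` A \<subseteq> E"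
  proof -
    have "f ` A \<subseteq> B" using step(3) by blast
    then show ?thesis using s2(5) by (auto simp: image_subset_iff)
  qed
  moreover have "A \<subseteq> cube k" using step(3) by blast
  ultimately show ?case using s2(4) by blast
qed

lemma composite_trans:
  assumes "composite l B p E g" "composite k A l B f"
  shows "composite k A p E (g \<circ> f)"
  using assms
proof induction
  case (single l B p E g)
  then show ?case using composite.step by blast
next
  case (step l B p E g q F h)
  then have "composite k A p E (g \<circ> f)" by blast
  then have "composite k A q F (h \<circ> (g \<circ> f))" using step(2) composite.step by blast
  then show ?case by (simp only: comp_assoc)
qed

lemma composite_id: "A \<subseteq> cube k \<Longrightarrow> composite k A k A id"
  by (rule composite.single, rule elementary.inclusion) auto

definition hh :: "(nat \<Rightarrow> nat + bool) \<Rightarrow> nat \<Rightarrow> bool list \<Rightarrow> bool list" where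
  "hh s t a = a @ map (\<lambda>i. ev (s i) a) [0..<t]"

lemma append_stage:
  assumes C: "C \<subseteq> cube n" and gd: "good n m s"
  shows "t \<le> m \<Longrightarrow> \<exists>g. composite n C (n+t) (hh s t ` C) g \<and> (\<forall>a\<in>C. g a = hh s t a)"
proof (induction t)
  case 0
  have "hh s 0 ` C = C" by (simp add: hh_def)
  then show ?case using composite_id[OF C] by (auto simp: hh_def)
next
  case (Suc t)
  then obtain g where g: "composite n C (n+t) (hh s t ` C) g" "\<forall>a\<in>C. g a = hh s t a" by auto
  have Bc: "hh s t ` C \<subseteq> cube (n+t)" using C by (auto simp: hh_def cube_def)
  have hs: "hh s (Suc t) a = hh s t a @ [ev (s t) a]" for a by (simp add: hh_def)
  have tm: "t < m" using Suc by simp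
  show ?case
  proof (cases "s t")
    case (Inl j)
    then have j: "j < n" using gd tm good_def by blast
    have e: "elementary (n+t) (hh s t ` C) (n+t+1) ((\<lambda>a. a @ [a ! j]) ` (hh s t ` C)) (\<lambda>a. a @ [a ! j])"
      by (rule elementary.repeat[OF Bc]) (use j in simp)
    have nth: "hh s t a ! j = a ! j" if "a \<in> C" for a using that C j by (auto simp: hh_def cube_def nth_append)
    have img: "(\<lambda>a. a @ [a ! j]) ` (hh s t ` C) = hh s (Suc t) ` C"
      unfolding image_image using nth Inl by (auto simp: hs ev_def intro!: image_cong)
    have "composite n C (n+t+1) ((\<lambda>a. a @ [a ! j]) ` (hh s t ` C)) ((\<lambda>a. a @ [a ! j]) \<circ> g)"
      by (rule composite.step[OF g(1) e])
    then show ?thesis using img g(2) nth Inl by (auto simp: hs ev_def intro!: exI[of _ "(\<lambda>a. a @ [a ! j]) \<circ> g"])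
  next
    case (Inr b)
    have e: "elementary (n+t) (hh s t ` C) (n+t+1) ((\<lambda>a. a @ [b]) ` (hh s t ` C)) (\<lambda>a. a @ [b])"
      by (rule elementary.add_trivial[OF Bc])
    have img: "(\<lambda>a. a @ [b]) ` (hh s t ` C) = hh s (Suc t) ` C"
      unfolding image_image using Inr by (auto simp: hs ev_def intro!: image_cong)
    have "composite n C (n+t+1) ((\<lambda>a. a @ [b]) ` (hh s t ` C)) ((\<lambda>a. a @ [b]) \<circ> g)"
      by (rule composite.step[OF g(1) e])
    then show ?thesis using img g(2) Inr by (auto simp: hs ev_def intro!: exI[of _ "(\<lambda>a. a @ [b]) \<circ> g"])
  qed
qed

lemma delete_stage:
  assumes A: "A \<subseteq> cube k"
  shows "t \<le> k \<Longrightarrow> \<exists>g. composite k A (k-t) (take (k-t) ` A) g \<and> (\<forall>a\<in>A. g a = take (k-t) a)"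
proof (induction t)
  case 0
  have tk: "\<forall>a\<in>A. take k a = a" using A by (auto simp: cube_def)
  then have "take k ` A = id ` A" by (auto intro: image_cong)
  then have "take k ` A = A" by simp
  moreover note tk
  ultimately show ?case using composite_id[OF A] by auto
next
  case (Suc t)
  then obtain g where g: "composite k A (k-t) (take (k-t) ` A) g" "\<forall>a\<in>A. g a = take (k-t) a" by auto
  have Bc: "take (k-t) ` A \<subseteq> cube (k-t)" using A by (auto simp: cube_def)
  have e: "elementary (k-t) (take (k-t) ` A) (k-t-1) (butlast ` (take (k-t) ` A)) butlast"
    by (rule elementary.delete_last[OF Bc]) (use Suc in simp)
  have bt: "butlast (take (k-t) a) = take (k - Suc t) a" if "a \<in> A" for a
    using that A Suc by (auto simp: cube_def butlast_take)
  have img: "butlast ` (take (k-t) ` A) = take (k - Suc t) ` A"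
    unfolding image_image using bt by (auto intro!: image_cong)
  have "composite k A (k-t-1) (butlast ` (take (k-t) ` A)) (butlast \<circ> g)"
    by (rule composite.step[OF g(1) e])
  then show ?case using img g(2) bt by (auto intro!: exI[of _ "butlast \<circ> g"])
qed

lemma rot_permutes:
  fixes n m :: nat
  shows "(\<lambda>i. if i < m then i + n else if i < n + m then i - m else i) permutes {..<n+m}"
proof (rule bij_imp_permutes)
  show "bij_betw (\<lambda>i. if i < m then i + n else if i < n + m then i - m else i) {..<n + m} {..<n + m}"
    by (rule bij_betw_byWitness[where f'="\<lambda>i. if i < n then i + m else if i < n + m then i - n else i"]) auto
qed auto

lemma construct:
  assumes C: "C \<subseteq> cube n" and D: "D \<subseteq> cube m" and gd: "good n m s"
    and inD: "\<forall>c\<in>C. map (\<lambda>i. ev (s i) c) [0..<m] \<in> D"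
  shows "\<exists>g. composite n C m D g \<and> (\<forall>c\<in>C. g c = map (\<lambda>i. ev (s i) c) [0..<m])"
proof -
  define w where "w = (\<lambda>c. map (\<lambda>i. ev (s i) c) [0..<m])"
  obtain g1 where g1: "composite n C (n+m) (hh s m ` C) g1" "\<forall>a\<in>C. g1 a = hh s m a"
    using append_stage[OF C gd, of m] by auto
  define \<sigma> where "\<sigma> = (\<lambda>i::nat. if i < m then i + n else if i < n + m then i - m else i)"
  define pf where "pf = (\<lambda>a::bool list. map (\<lambda>i. a ! \<sigma> i) [0..<n+m])"
  have Bc: "hh s m ` C \<subseteq> cube (n+m)" using C by (auto simp: hh_def cube_def)
  have e1: "elementary (n+m) (hh s m ` C) (n+m) (pf ` (hh s m ` C)) pf"
    unfolding pf_def by (rule elementary.permute[OF Bc]) (use rot_permutes in \<open>simp add: \<sigma>_def\<close>)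
  have pfh: "pf (hh s m a) = w a @ a" if "a \<in> C" for a
  proof (rule nth_equalityI)
    have la: "length a = n" using that C by (auto simp: cube_def)
    show "length (pf (hh s m a)) = length (w a @ a)" by (simp add: pf_def w_def la)
    fix i assume "i < length (pf (hh s m a))"
    then have i: "i < n + m" by (simp add: pf_def)
    show "pf (hh s m a) ! i = (w a @ a) ! i"
      using i la by (auto simp: pf_def \<sigma>_def hh_def w_def nth_append)
  qed
  have img1: "pf ` (hh s m ` C) = (\<lambda>a. w a @ a) ` C"
    unfolding image_image using pfh by (auto intro!: image_cong)
  have c2: "composite n C (n+m) ((\<lambda>a. w a @ a) ` C) (pf \<circ> g1)"
    using composite.step[OF g1(1) e1] img1 by simp
  have Bc2: "(\<lambda>a. w a @ a) ` C \<subseteq> cube (m+n)" using C by (auto simp: w_def cube_def)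
  obtain g3 where g3: "composite (m+n) ((\<lambda>a. w a @ a) ` C) (m+n-n) (take (m+n-n) ` (\<lambda>a. w a @ a) ` C) g3"
      "\<forall>a\<in>(\<lambda>a. w a @ a) ` C. g3 a = take (m+n-n) a"
    using delete_stage[OF Bc2, of n] by auto
  have img3: "take (m+n-n) ` (\<lambda>a. w a @ a) ` C = w ` C"
    unfolding image_image by (auto simp: w_def intro!: image_cong)
  have c3: "composite n C m (w ` C) (g3 \<circ> (pf \<circ> g1))"
    using composite_trans[OF g3(1)] c2 img3 by (simp add: add.commute)
  have wC: "w ` C \<subseteq> cube m" using D inD by (auto simp: w_def)
  have e4: "elementary m (w ` C) m D id"
    by (rule elementary.inclusion) (use inD D in \<open>auto simp: w_def\<close>)
  have c4: "composite n C m D (id \<circ> (g3 \<circ> (pf \<circ> g1)))"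
    by (rule composite.step[OF c3 e4])
  have "\<forall>c\<in>C. (id \<circ> (g3 \<circ> (pf \<circ> g1))) c = w c"
    using g1(2) pfh g3(2) by (auto simp: w_def)
  then show ?thesis using c4 unfolding w_def by blast
qed

lemma finite_cube: "finite (cube m)"
  unfolding cube_def by (rule finite_list_length)

locale hom_ctx =
  fixes C D :: "bool list set" and \<phi> :: "(bool list \<Rightarrow> bool) \<Rightarrow> (bool list \<Rightarrow> bool)"
  assumes hom: "\<phi> \<in> ring_hom (code_ring D) (code_ring C)"
begin

lemma carr: "\<forall>x. x \<notin> D \<longrightarrow> f x = False \<Longrightarrow> x \<notin> C \<Longrightarrow> \<phi> f x = False"
  using hom unfolding ring_hom_def code_ring_def by (auto simp: Pi_def)

lemma hadd: "\<forall>x. x \<notin> D \<longrightarrow> f x = False \<Longrightarrow> \<forall>x. x \<notin> D \<longrightarrow> g x = False \<Longrightarrow>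
   \<phi> (\<lambda>x. f x \<noteq> g x) = (\<lambda>x. \<phi> f x \<noteq> \<phi> g x)"
  using hom unfolding ring_hom_def code_ring_def by auto

lemma hmult: "\<forall>x. x \<notin> D \<longrightarrow> f x = False \<Longrightarrow> \<forall>x. x \<notin> D \<longrightarrow> g x = False \<Longrightarrow>
   \<phi> (\<lambda>x. f x \<and> g x) = (\<lambda>x. \<phi> f x \<and> \<phi> g x)"
  using hom unfolding ring_hom_def code_ring_def by auto

lemma hone: "\<phi> (\<lambda>x. x \<in> D) = (\<lambda>x. x \<in> C)"
  using hom unfolding ring_hom_def code_ring_def by auto

lemma hzero: "\<phi> (\<lambda>x. False) = (\<lambda>x. False)"
proof -
  have "\<phi> (\<lambda>x. False \<noteq> False) = (\<lambda>x. \<phi> (\<lambda>x. False) x \<noteq> \<phi> (\<lambda>x. False) x)"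
    by (rule hadd) auto
  then show ?thesis by simp
qed

lemma ind_sum:
  assumes "finite S"
  shows "S \<subseteq> D \<Longrightarrow> \<phi> (\<lambda>x. x \<in> S) c = (\<exists>d\<in>S. \<phi> (rho d) c)"
  using assms
proof (induction S rule: finite_induct)
  case empty
  then show ?case using hzero by simp
next
  case (insert d S)
  have e1: "(\<lambda>x. x \<in> insert d S) = (\<lambda>x. (x \<in> S) \<noteq> rho d x)"
    using insert(2) by (auto simp: rho_def)
  have cS: "\<forall>x. x \<notin> D \<longrightarrow> (x \<in> S) = False" and cd: "\<forall>x. x \<notin> D \<longrightarrow> rho d x = False"
    using insert(4) by (auto simp: rho_def)
  have a: "\<phi> (\<lambda>x. x \<in> insert d S) = (\<lambda>x. \<phi> (\<lambda>x. x \<in> S) x \<noteq> \<phi> (rho d) x)"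
    unfolding e1 using hadd[OF cS cd] by simp
  have "(\<lambda>x. x \<in> S \<and> rho d x) = (\<lambda>x. False)"
    using insert(2) by (auto simp: rho_def)
  then have "(\<lambda>x. \<phi> (\<lambda>x. x \<in> S) x \<and> \<phi> (rho d) x) = (\<lambda>x. False)"
    using hmult[OF cS cd] hzero by simp
  then have b: "\<not> (\<phi> (\<lambda>x. x \<in> S) c \<and> \<phi> (rho d) c)" by meson
  show ?case using a b insert by auto
qed

lemma ex1:
  assumes D: "D \<subseteq> cube m" and c: "c \<in> C"
  shows "\<exists>!d. d \<in> D \<and> \<phi> (rho d) c"
proof -
  have fD: "finite D" using D finite_cube finite_subset by blast
  have "\<exists>d\<in>D. \<phi> (rho d) c" using ind_sum[OF fD, of c] hone c by simp
  moreover have "d = d'" if "d \<in> D" "d' \<in> D" "\<phi> (rho d) c" "\<phi> (rho d') c" for d d'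
  proof (rule ccontr)
    assume ne: "d \<noteq> d'"
    have cd: "\<forall>x. x \<notin> D \<longrightarrow> rho d x = False" "\<forall>x. x \<notin> D \<longrightarrow> rho d' x = False"
      using that by (auto simp: rho_def)
    have "(\<lambda>x. rho d x \<and> rho d' x) = (\<lambda>x. False)" using ne by (auto simp: rho_def)
    then have "(\<lambda>x. \<phi> (rho d) x \<and> \<phi> (rho d') x) = (\<lambda>x. False)"
      using hmult[OF cd] hzero by simp
    then show False using that by meson
  qed
  ultimately show ?thesis by blast
qed

lemma qmap:
  assumes D: "D \<subseteq> cube m" and c: "c \<in> C"
  shows "code_map D \<phi> c \<in> D \<and> \<phi> (rho (code_map D \<phi> c)) c"
  unfolding code_map_def using theI'[OF ex1[OF D c]] .

lemma qeval:
  assumes D: "D \<subseteq> cube m" and c: "c \<in> C" and f: "\<forall>x. x \<notin> D \<longrightarrow> f x = False"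
  shows "\<phi> f c = f (code_map D \<phi> c)"
proof -
  have fD: "finite D" using D finite_cube finite_subset by blast
  have fe: "f = (\<lambda>x. x \<in> {d\<in>D. f d})" using f by auto
  have "\<phi> f c = (\<exists>d\<in>{d\<in>D. f d}. \<phi> (rho d) c)"
    by (subst fe, rule ind_sum) (use fD in auto)
  also have "\<dots> = f (code_map D \<phi> c)"
    using qmap[OF D c] ex1[OF D c] by blast
  finally show ?thesis .
qed

end

lemma ring_zero_one:
  "\<zero>\<^bsub>code_ring X\<^esub> = (\<lambda>x. False)" "\<one>\<^bsub>code_ring X\<^esub> = (\<lambda>x. x \<in> X)"
  by (simp_all add: code_ring_def)

theorem theorem4:
  fixes C D :: "bool list set" and n m :: nat
    and \<phi> :: "(bool list \<Rightarrow> bool) \<Rightarrow> (bool list \<Rightarrow> bool)"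
  assumes "C \<subseteq> cube n" and "D \<subseteq> cube m"
    and "\<phi> \<in> ring_hom (code_ring D) (code_ring C)"
  shows "neural_ring_hom n C m D \<phi> \<longleftrightarrow>
           (\<exists>g. composite n C m D g \<and> (\<forall>c \<in> C. g c = code_map D \<phi> c))"
proof -
  interpret H: hom_ctx C D \<phi> by unfold_locales (rule assms(3))
  let ?q = "code_map D \<phi>"
  show ?thesis
  proof
    assume "neural_ring_hom n C m D \<phi>"
    then obtain \<tau> where lm: "linear_monomial m n \<tau>" and cp: "compatible m D C \<tau> \<phi>"
      unfolding neural_ring_hom_def by blast
    have key: "\<tau> (var m i) c = ?q c ! i" if c: "c \<in> C" and i: "i < m" for c i
    proof -
      have qc: "?q c \<in> D" "\<phi> (rho (?q c)) c" using H.qmap[OF assms(2) c] by auto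
      have r: "var m i \<in> carrier (poly_ring m)" by (simp add: code_ring_def var_def)
      have f: "rho (?q c) \<in> carrier (code_ring D)" using qc by (auto simp: code_ring_def rho_def)
      have eq: "\<phi> (act (var m i) (rho (?q c))) = act (\<tau> (var m i)) (\<phi> (rho (?q c)))"
        using cp r f unfolding compatible_def by blast
      have "\<phi> (act (var m i) (rho (?q c))) c = act (var m i) (rho (?q c)) (?q c)"
        by (rule H.qeval[OF assms(2) c]) (use qc in \<open>auto simp: act_def rho_def\<close>)
      also have "\<dots> = ?q c ! i" using qc assms(2) by (auto simp: act_def rho_def var_def)
      finally show ?thesis using eq qc(2) by (simp add: act_def)
    qed
    define s where "s = (\<lambda>i. if \<exists>j<n. \<tau> (var m i) = var n j
        then Inl (SOME j. j < n \<and> \<tau> (var m i) = var n j)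
        else if \<tau> (var m i) = (\<lambda>x. False) then Inr False else Inr True)"
    have sv: "good n m s \<and> (\<forall>c\<in>C. ev (s i) c = \<tau> (var m i) c)" if i: "i < m" for i
    proof (cases "\<exists>j<n. \<tau> (var m i) = var n j")
      case True
      define j where "j = (SOME j. j < n \<and> \<tau> (var m i) = var n j)"
      have j: "j < n \<and> \<tau> (var m i) = var n j" unfolding j_def using True by (rule someI_ex) 
      show ?thesis
      proof
        show "good n m s" unfolding good_def
        proof (intro allI impI)
          fix i' j' assume "i' < m" "s i' = Inl j'"
          then show "j' < n" unfolding s_def
            by (auto split: if_splits intro: someI2_ex)
        qed
        show "\<forall>c\<in>C. ev (s i) c = \<tau> (var m i) c"
        proof
          fix c assume c: "c \<in> C"
          have si: "s i = Inl j" using True by (simp add: s_def j_def)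
          have "\<tau> (var m i) c = var n j c" using j by simp
          then show "ev (s i) c = \<tau> (var m i) c" using si c assms(1) by (auto simp: ev_def var_def)
        qed
      qed
    next
      case False
      have mem: "\<tau> (var m i) \<in> {var n j | j. j < n} \<union> {\<lambda>x. False, \<lambda>x. x \<in> cube n}"
        using lm i unfolding linear_monomial_def ring_zero_one by blast
      show ?thesis
      proof
        show "good n m s" unfolding good_def
        proof (intro allI impI)
          fix i' j' assume "i' < m" "s i' = Inl j'"
          then show "j' < n" unfolding s_def
            by (auto split: if_splits intro: someI2_ex)
        qed
        show "\<forall>c\<in>C. ev (s i) c = \<tau> (var m i) c"
          using False mem assms(1) by (auto simp: s_def ev_def)
      qed
    qed
    have gd: "good n m s" using sv[of 0] unfolding good_def by (cases "m = 0") auto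
    have qform: "?q c = map (\<lambda>i. ev (s i) c) [0..<m]" if c: "c \<in> C" for c
    proof (rule nth_equalityI)
      have "?q c \<in> D" using H.qmap[OF assms(2) c] by auto
      then show "length (?q c) = length (map (\<lambda>i. ev (s i) c) [0..<m])"
        using assms(2) by (auto simp: cube_def)
      fix i assume "i < length (?q c)"
      then have "i < m" using \<open>?q c \<in> D\<close> assms(2) by (auto simp: cube_def)
      then show "?q c ! i = map (\<lambda>i. ev (s i) c) [0..<m] ! i"
        using sv key c by simp
    qed
    have "\<forall>c\<in>C. map (\<lambda>i. ev (s i) c) [0..<m] \<in> D"
      using qform H.qmap[OF assms(2)] by auto
    then obtain g where "composite n C m D g" "\<forall>c\<in>C. g c = map (\<lambda>i. ev (s i) c) [0..<m]"
      using construct[OF assms(1,2) gd] by blast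
    then show "\<exists>g. composite n C m D g \<and> (\<forall>c \<in> C. g c = ?q c)"
      using qform by auto
  next
    assume "\<exists>g. composite n C m D g \<and> (\<forall>c \<in> C. g c = ?q c)"
    then obtain g where g: "composite n C m D g" "\<forall>c \<in> C. g c = ?q c" by blast
    obtain s where gd: "good n m s" and gs: "\<forall>a\<in>C. g a = map (\<lambda>i. ev (s i) a) [0..<m]"
      using composite_form[OF g(1)] by blast
    define P where "P = (\<lambda>x. map (\<lambda>i. ev (s i) x) [0..<m])"
    define \<tau> where "\<tau> = (\<lambda>r x. x \<in> cube n \<and> r (P x))"
    have Pc: "P x \<in> cube m" for x by (simp add: P_def cube_def)
    have th: "\<tau> \<in> ring_hom (poly_ring m) (poly_ring n)"
      unfolding ring_hom_def code_ring_def \<tau>_def using Pc by auto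
    have tv: "\<tau> (var m i) \<in> {var n j | j. j < n} \<union> {\<zero>\<^bsub>poly_ring n\<^esub>, \<one>\<^bsub>poly_ring n\<^esub>}"
      if i: "i < m" for i
    proof -
      have e: "\<tau> (var m i) = (\<lambda>x. x \<in> cube n \<and> ev (s i) x)"
        using i Pc by (auto simp: \<tau>_def var_def P_def)
      show ?thesis
      proof (cases "s i")
        case (Inl j)
        then have "j < n" using gd i good_def by blast
        moreover have "\<tau> (var m i) = var n j" using e Inl by (auto simp: var_def ev_def)
        ultimately show ?thesis by blast
      next
        case (Inr b)
        then show ?thesis using e by (cases b) (auto simp: ev_def ring_zero_one)
      qed
    qed
    have cpt: "compatible m D C \<tau> \<phi>"
      unfolding compatible_def
    proof (intro ballI)
      fix r f assume r: "r \<in> carrier (poly_ring m)" and f: "f \<in> carrier (code_ring D)"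
      have fD: "\<forall>x. x \<notin> D \<longrightarrow> f x = False" using f by (simp add: code_ring_def)
      have afD: "\<forall>x. x \<notin> D \<longrightarrow> act r f x = False" using fD by (simp add: act_def)
      show "\<phi> (act r f) = act (\<tau> r) (\<phi> f)"
      proof
        fix x
        show "\<phi> (act r f) x = act (\<tau> r) (\<phi> f) x"
        proof (cases "x \<in> C")
          case True
          have "P x = ?q x" using g(2) gs True by (simp add: P_def)
          moreover have "x \<in> cube n" using True assms(1) by blast
          ultimately show ?thesis
            using H.qeval[OF assms(2) True afD] H.qeval[OF assms(2) True fD]
            by (simp add: act_def \<tau>_def)
        next
          case False
          then show ?thesis using H.carr[OF afD False] H.carr[OF fD False] by (simp add: act_def)
        qed
      qed
    qed
    show "neural_ring_hom n C m D \<phi>"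
      unfolding neural_ring_hom_def linear_monomial_def using assms(3) th tv cpt by blast
  qed
qed

end
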